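(* Let $M$ be a $4$-dimensional manifold with local coordinates $(x^1,\dots,x^4)$, $e_i=\partial/\partial x^i$, and Riemannian metric $g$ with components \[(g_{ij})=\begin{pmatrix} A&B&C&B\\ B&A&B&C\\ C&B&A&B\\ B&C&B&A\end{pmatrix},\] $A,B,C$ smooth functions with $A>C>B>0$. Let $P$ be the almost product structure with component matrix having rows $(0,0,1,0),(0,0,0,1),(1,0,0,0),(0,1,0,0)$. Then $(M,g,P)$ belongs to the class $\mathcal{W}_2$ if and only if \[(A+C)(C_3-A_1)=2B(B_3-B_1),\quad C_3-A_1=A_3-C_1,\quad (A+C)(C_4-A_2)=2B(B_4-B_2),\quad C_4-A_2=A_4-C_2,\] where $A_i=\partial A/\partial x^i$, $B_i=\partial B/\partial x^i$, $C_i=\partial C/\partial x^i$.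
   Context: Let $\nabla$ be the Levi-Civita connection of $g$, $F(x,y,z)=g((\nabla_xP)y,z)$, and $\theta(x)=g^{ij}F(e_i,e_j,x)$ with $(g^{ij})$ the inverse of $(g_{ij})$. The manifold $(M,g,P)$ belongs to the class $\mathcal{W}_2$ if for all vector fields $x,y,z$: \[F(x,y,Pz)+F(y,z,Px)+F(z,x,Py)=0\quad\text{and}\quad \theta(z)=0.\] *)

theory Defs
  imports "HOL-Analysis.Analysis"
begin

text \<open>Coordinate calculus on an open chart domain U of real^n.
  The coordinate x^i corresponds to the index i, e_i = axis i 1.\<close>

definition pd :: "'n::finite \<Rightarrow> (real^'n \<Rightarrow> real) \<Rightarrow> real^'n \<Rightarrow> real" where
  "pd i f p = deriv (\<lambda>t. f (p + t *\<^sub>R axis i 1)) 0"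

fun Ck_on :: "nat \<Rightarrow> (real^'n::finite) set \<Rightarrow> (real^'n \<Rightarrow> real) \<Rightarrow> bool" where
  "Ck_on 0 U f = continuous_on U f"
| "Ck_on (Suc k) U f = (continuous_on U f \<and>
      (\<forall>i. \<forall>p\<in>U. (\<lambda>t. f (p + t *\<^sub>R axis i 1)) differentiable (at 0)) \<and>
      (\<forall>i. Ck_on k U (pd i f)))"

definition coord_smooth_on :: "(real^'n::finite) set \<Rightarrow> (real^'n \<Rightarrow> real) \<Rightarrow> bool" where
  "coord_smooth_on U f = (\<forall>k. Ck_on k U f)"

text \<open>Christoffel symbols of the Levi-Civita connection:
  nabla_{e_i} e_j = sum_k Gamma k i j e_k.\<close>
definition christoffel :: "(real^'n::finite \<Rightarrow> real^'n^'n) \<Rightarrow> real^'n \<Rightarrow> 'n \<Rightarrow> 'n \<Rightarrow> 'n \<Rightarrow> real" where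
  "christoffel g p k i j = (1/2) * (\<Sum>l\<in>UNIV. matrix_inv (g p) $ k $ l *
      (pd i (\<lambda>q. g q $ j $ l) p + pd j (\<lambda>q. g q $ i $ l) p - pd l (\<lambda>q. g q $ i $ j) p))"

text \<open>Constant endomorphism P with P e_j = sum_a P$a$j e_a.
  Component b of (nabla_{e_i} P) e_j = nabla_{e_i}(P e_j) - P(nabla_{e_i} e_j).\<close>
definition nablaP :: "(real^'n::finite \<Rightarrow> real^'n^'n) \<Rightarrow> real^'n^'n \<Rightarrow> real^'n \<Rightarrow> 'n \<Rightarrow> 'n \<Rightarrow> real^'n" where
  "nablaP g P p i j = (\<chi> b. (\<Sum>a\<in>UNIV. P $ a $ j * christoffel g p b i a)
                         - (\<Sum>c\<in>UNIV. christoffel g p c i j * P $ b $ c))"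

definition Fcoord :: "(real^'n::finite \<Rightarrow> real^'n^'n) \<Rightarrow> real^'n^'n \<Rightarrow> real^'n \<Rightarrow> 'n \<Rightarrow> 'n \<Rightarrow> 'n \<Rightarrow> real" where
  "Fcoord g P p i j k = (\<Sum>b\<in>UNIV. g p $ b $ k * nablaP g P p i j $ b)"

definition Ften :: "(real^'n::finite \<Rightarrow> real^'n^'n) \<Rightarrow> real^'n^'n \<Rightarrow> real^'n \<Rightarrow> real^'n \<Rightarrow> real^'n \<Rightarrow> real^'n \<Rightarrow> real" where
  "Ften g P p x y z = (\<Sum>i\<in>UNIV. \<Sum>j\<in>UNIV. \<Sum>k\<in>UNIV. x $ i * y $ j * z $ k * Fcoord g P p i j k)"

definition theta :: "(real^'n::finite \<Rightarrow> real^'n^'n) \<Rightarrow> real^'n^'n \<Rightarrow> real^'n \<Rightarrow> real^'n \<Rightarrow> real" where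
  "theta g P p z = (\<Sum>i\<in>UNIV. \<Sum>j\<in>UNIV. matrix_inv (g p) $ i $ j * Ften g P p (axis i 1) (axis j 1) z)"

definition W2_at :: "(real^'n::finite \<Rightarrow> real^'n^'n) \<Rightarrow> real^'n^'n \<Rightarrow> real^'n \<Rightarrow> bool" where
  "W2_at g P p = ((\<forall>x y z. Ften g P p x y (P *v z) + Ften g P p y z (P *v x) + Ften g P p z x (P *v y) = 0)
                  \<and> (\<forall>z. theta g P p z = 0))"

definition gmat :: "(real^4 \<Rightarrow> real) \<Rightarrow> (real^4 \<Rightarrow> real) \<Rightarrow> (real^4 \<Rightarrow> real) \<Rightarrow> real^4 \<Rightarrow> real^4^4" where
  "gmat A B C p = vector [vector [A p, B p, C p, B p], vector [B p, A p, B p, C p],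
                          vector [C p, B p, A p, B p], vector [B p, C p, B p, A p]]"

definition Pmat :: "real^4^4" where
  "Pmat = vector [vector [0,0,1,0], vector [0,0,0,1], vector [1,0,0,0], vector [0,1,0,0]]"

lemma "gmat A B C p $ 1 $ 3 = C p" "gmat A B C p $ 4 $ 2 = C p" "Pmat $ 4 $ 2 = 1"
  by (simp_all add: gmat_def Pmat_def vector_def)

end

theory Submission imports Defs begin

definition s4 :: "4 \<Rightarrow> 4" where
  "s4 k = (if k = 1 then 3 else if k = 2 then 4 else if k = 3 then 1 else 2)"

lemma s4_simps[simp]: "s4 1 = 3" "s4 2 = 4" "s4 3 = 1" "s4 4 = 2"
  by (simp_all add: s4_def)

definition Hmat :: "real \<Rightarrow> real \<Rightarrow> real \<Rightarrow> real^4^4" where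
  "Hmat al be ga = vector [vector [al,be,ga,be], vector [be,al,be,ga],
                           vector [ga,be,al,be], vector [be,ga,be,al]]"

definition "alf a b c = (1/(a+2*b+c) + 2/(a-c) + 1/(a-2*b+c))/4"
definition "bet a b c = (1/(a+2*b+c) - 1/(a-2*b+c))/(4::real)"
definition "gam a b c = (1/(a+2*b+c) - 2/(a-c) + 1/(a-2*b+c))/4"

lemma scal:
  fixes a b c :: real
  assumes "a+2*b+c \<noteq> 0" "a-c \<noteq> 0" "a-2*b+c \<noteq> 0"
  shows "a * alf a b c + b * bet a b c + c * gam a b c + b * bet a b c = 1"
    "b * alf a b c + a * bet a b c + b * gam a b c + c * bet a b c = 0"
    "c * alf a b c + b * bet a b c + a * gam a b c + b * bet a b c = 0"
proof -
  define r1 where "r1 = 1/(a+2*b+c)"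
  define r2 where "r2 = 1/(a-c)"
  define r3 where "r3 = 1/(a-2*b+c)"
  have e: "(a+2*b+c) * r1 = 1" "(a-c) * r2 = 1" "(a-2*b+c) * r3 = 1" using assms by (simp_all add: r1_def r2_def r3_def)
  have d: "alf a b c = (r1+2*r2+r3)/4" "bet a b c = (r1-r3)/4" "gam a b c = (r1-2*r2+r3)/4"
    by (simp_all add: alf_def bet_def gam_def r1_def r2_def r3_def)
  have "a * alf a b c + b * bet a b c + c * gam a b c + b * bet a b c = ((a+2*b+c) * r1 + 2*((a-c) * r2) + (a-2*b+c) * r3)/4"
    unfolding d by (simp add: algebra_simps add_divide_distrib[symmetric])
  then show "a * alf a b c + b * bet a b c + c * gam a b c + b * bet a b c = 1" using e by simp
  have "b * alf a b c + a * bet a b c + b * gam a b c + c * bet a b c = ((a+2*b+c) * r1 - (a-2*b+c) * r3)/4"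
    unfolding d by (simp add: algebra_simps add_divide_distrib[symmetric] diff_divide_distrib[symmetric])
  then show "b * alf a b c + a * bet a b c + b * gam a b c + c * bet a b c = 0" using e by simp
  have "c * alf a b c + b * bet a b c + a * gam a b c + b * bet a b c = ((a+2*b+c) * r1 - 2*((a-c) * r2) + (a-2*b+c) * r3)/4"
    unfolding d by (simp add: algebra_simps add_divide_distrib[symmetric] diff_divide_distrib[symmetric])
  then show "c * alf a b c + b * bet a b c + a * gam a b c + b * bet a b c = 0" using e by simp
qed

lemma gH:
  assumes "A p > C p" "C p > B p" "B p > 0"
  shows "gmat A B C p ** Hmat (alf (A p) (B p) (C p)) (bet (A p) (B p) (C p)) (gam (A p) (B p) (C p)) = mat 1"
    "Hmat (alf (A p) (B p) (C p)) (bet (A p) (B p) (C p)) (gam (A p) (B p) (C p)) ** gmat A B C p = mat 1"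
proof -
  have n: "A p + 2 * B p + C p \<noteq> 0" "A p - C p \<noteq> 0" "A p - 2 * B p + C p \<noteq> 0" using assms by auto
  note s = scal[OF n]
  show "gmat A B C p ** Hmat (alf (A p) (B p) (C p)) (bet (A p) (B p) (C p)) (gam (A p) (B p) (C p)) = mat 1"
    unfolding vec_eq_iff forall_4 matrix_matrix_mult_def
    using s by (simp add: sum_4 gmat_def Hmat_def vector_def mat_def algebra_simps)
  show "Hmat (alf (A p) (B p) (C p)) (bet (A p) (B p) (C p)) (gam (A p) (B p) (C p)) ** gmat A B C p = mat 1"
    unfolding vec_eq_iff forall_4 matrix_matrix_mult_def
    using s by (simp add: sum_4 gmat_def Hmat_def vector_def mat_def algebra_simps)
qed


lemma minv_unique:
  fixes M N :: "real^'n::finite^'n"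
  assumes "M ** N = mat 1" "N ** M = mat 1"
  shows "matrix_inv M = N"
proof -
  have "\<exists>N'. M ** N' = mat 1 \<and> N' ** M = mat 1" using assms by blast
  then have h: "M ** matrix_inv M = mat 1 \<and> matrix_inv M ** M = mat 1"
    unfolding matrix_inv_def by (rule someI_ex)
  have "matrix_inv M = matrix_inv M ** (M ** N)" using assms by (simp add: matrix_mul_rid)
  also have "\<dots> = (matrix_inv M ** M) ** N" by (simp add: matrix_mul_assoc)
  also have "\<dots> = N" using h by (simp add: matrix_mul_lid)
  finally show ?thesis .
qed

lemma delta_sum: "(\<Sum>l\<in>(UNIV::'n::finite set). (if k = l then 1 else 0) * f l) = (f k :: real)"
proof -
  have "(\<Sum>l\<in>UNIV. (if k = l then 1 else 0) * f l) = (\<Sum>l\<in>(UNIV::'n set). if k = l then f l else 0)"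
    by (rule sum.cong) auto
  then show ?thesis by simp
qed

lemma delta_sum2: "(\<Sum>l\<in>(UNIV::'n::finite set). (if l = k then 1 else 0) * f l) = (f k :: real)"
proof -
  have "(\<Sum>l\<in>UNIV. (if l = k then 1 else 0) * f l) = (\<Sum>l\<in>(UNIV::'n set). if k = l then f l else 0)"
    by (rule sum.cong) auto
  then show ?thesis by simp
qed

definition Lc :: "(real^'n::finite \<Rightarrow> real^'n^'n) \<Rightarrow> real^'n \<Rightarrow> 'n \<Rightarrow> 'n \<Rightarrow> 'n \<Rightarrow> real" where
  "Lc g p i j l = pd i (\<lambda>q. g q $ j $ l) p + pd j (\<lambda>q. g q $ i $ l) p - pd l (\<lambda>q. g q $ i $ j) p"

lemma lower:
  fixes g :: "real^'n::finite \<Rightarrow> real^'n^'n"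
  assumes D: "\<And>k l. (\<Sum>b\<in>UNIV. g p $ b $ k * matrix_inv (g p) $ b $ l) = (if k = l then 1 else 0)"
  shows "(\<Sum>b\<in>UNIV. g p $ b $ k * christoffel g p b i a) = Lc g p i a k / 2"
proof -
  have "(\<Sum>b\<in>UNIV. g p $ b $ k * christoffel g p b i a)
      = (1/2) * (\<Sum>b\<in>UNIV. \<Sum>l\<in>UNIV. g p $ b $ k * matrix_inv (g p) $ b $ l * Lc g p i a l)"
    unfolding christoffel_def Lc_def by (simp add: sum_distrib_left mult.assoc mult.left_commute)
  also have "\<dots> = (1/2) * (\<Sum>l\<in>UNIV. (\<Sum>b\<in>UNIV. g p $ b $ k * matrix_inv (g p) $ b $ l) * Lc g p i a l)"
    by (subst sum.swap) (simp add: sum_distrib_right)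
  also have "\<dots> = Lc g p i a k / 2" by (simp add: D delta_sum)
  finally show ?thesis .
qed

lemma Fcoord_eq:
  fixes g :: "real^'n::finite \<Rightarrow> real^'n^'n" and s :: "'n \<Rightarrow> 'n"
  assumes D: "\<And>k l. (\<Sum>b\<in>UNIV. g p $ b $ k * matrix_inv (g p) $ b $ l) = (if k = l then 1 else 0)"
    and Pd: "\<And>a j. P $ a $ j = (if a = s j then 1 else 0)"
    and Q: "\<And>k c. (\<Sum>b\<in>UNIV. g p $ b $ k * P $ b $ c) = g p $ c $ s k"
  shows "Fcoord g P p i j k = (Lc g p i (s j) k - Lc g p i j (s k)) / 2"
proof -
  have "Fcoord g P p i j k = (\<Sum>b\<in>UNIV. g p $ b $ k * (\<Sum>a\<in>UNIV. P $ a $ j * christoffel g p b i a))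
     - (\<Sum>b\<in>UNIV. g p $ b $ k * (\<Sum>c\<in>UNIV. christoffel g p c i j * P $ b $ c))"
    unfolding Fcoord_def nablaP_def by (simp add: right_diff_distrib sum_subtractf)
  also have "(\<Sum>b\<in>UNIV. g p $ b $ k * (\<Sum>a\<in>UNIV. P $ a $ j * christoffel g p b i a))
      = (\<Sum>a\<in>UNIV. P $ a $ j * (\<Sum>b\<in>UNIV. g p $ b $ k * christoffel g p b i a))"
    apply (simp only: sum_distrib_left)
    apply (subst sum.swap)
    apply (simp add: ac_simps)
    done
  also have "\<dots> = Lc g p i (s j) k / 2"
    by (simp only: lower[where g=g and p=p, OF D] Pd delta_sum2)
  also have "(\<Sum>b\<in>UNIV. g p $ b $ k * (\<Sum>c\<in>UNIV. christoffel g p c i j * P $ b $ c))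
      = (\<Sum>c\<in>UNIV. christoffel g p c i j * (\<Sum>b\<in>UNIV. g p $ b $ k * P $ b $ c))"
    apply (simp only: sum_distrib_left)
    apply (subst sum.swap)
    apply (simp add: ac_simps)
    done
  also have "\<dots> = (\<Sum>c\<in>UNIV. g p $ c $ s k * christoffel g p c i j)"
    using Q by (simp add: mult.commute)
  also have "\<dots> = Lc g p i j (s k) / 2"
    by (rule lower[where g=g and p=p, OF D])
  finally show ?thesis by (simp add: diff_divide_distrib)
qed


lemma Pm: "Pmat $ a $ j = (if a = s4 j then 1 else 0)"
proof -
  have "\<forall>a j. Pmat $ a $ j = (if a = s4 j then 1 else (0::real))"
    unfolding forall_4 by (simp add: Pmat_def vector_def)
  then show ?thesis by blast
qed

lemma Qg: "(\<Sum>b\<in>UNIV. gmat A B C p $ b $ k * Pmat $ b $ c) = gmat A B C p $ c $ s4 k"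
proof -
  have "\<forall>k c. (\<Sum>b\<in>UNIV. gmat A B C p $ b $ k * Pmat $ b $ c) = gmat A B C p $ c $ s4 k"
    unfolding forall_4 by (simp add: sum_4 Pmat_def gmat_def vector_def)
  then show ?thesis by blast
qed

lemma Pv: "(Pmat *v z) $ k = z $ s4 k"
proof -
  have "\<forall>k. (Pmat *v z) $ k = z $ s4 k"
    unfolding forall_4 by (simp add: sum_4 Pmat_def vector_def matrix_vector_mult_def)
  then show ?thesis by blast
qed

lemma Dg:
  assumes "A p > C p" "C p > B p" "B p > 0"
  shows "(\<Sum>b\<in>UNIV. gmat A B C p $ b $ k * matrix_inv (gmat A B C p) $ b $ l) = (if k = l then 1 else 0)"
proof -
  have n: "A p + 2 * B p + C p \<noteq> 0" "A p - C p \<noteq> 0" "A p - 2 * B p + C p \<noteq> 0" using assms by auto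
  note s = scal[OF n]
  have "\<forall>k l. (\<Sum>b\<in>UNIV. gmat A B C p $ b $ k * Hmat (alf (A p) (B p) (C p)) (bet (A p) (B p) (C p)) (gam (A p) (B p) (C p)) $ b $ l) = (if k = l then 1 else 0)"
    unfolding forall_4 using s by (simp add: sum_4 gmat_def Hmat_def vector_def algebra_simps)
  then show ?thesis using minv_unique[OF gH[where A=A and B=B and C=C and p=p, OF assms]] by simp
qed

lemma Fc:
  assumes "A p > C p" "C p > B p" "B p > 0"
  shows "Fcoord (gmat A B C) Pmat p i j k = (Lc (gmat A B C) p i (s4 j) k - Lc (gmat A B C) p i j (s4 k)) / 2"
  by (rule Fcoord_eq[where g="gmat A B C" and p=p and s=s4, OF Dg[where A=A and B=B and C=C and p=p, OF assms] Pm Qg])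

definition Fh :: "(real^4 \<Rightarrow> real) \<Rightarrow> (real^4 \<Rightarrow> real) \<Rightarrow> (real^4 \<Rightarrow> real) \<Rightarrow> real^4 \<Rightarrow> real^4 \<Rightarrow> real^4 \<Rightarrow> real^4 \<Rightarrow> real" where
  "Fh A B C p x y w = (\<Sum>i\<in>UNIV. \<Sum>j\<in>UNIV. \<Sum>k\<in>UNIV. x $ i * y $ j * w $ k *
      (Lc (gmat A B C) p i (s4 j) k - Lc (gmat A B C) p i j (s4 k)))"

lemma Ften_half:
  assumes "A p > C p" "C p > B p" "B p > 0"
  shows "Ften (gmat A B C) Pmat p x y w = Fh A B C p x y w / 2"
  unfolding Ften_def Fh_def Fc[where A=A and B=B and C=C and p=p, OF assms]
  by (simp add: sum_divide_distrib)

lemma cyc: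
  assumes "A p > C p" "C p > B p" "B p > 0"
  shows "Ften (gmat A B C) Pmat p x y (Pmat *v z) + Ften (gmat A B C) Pmat p y z (Pmat *v x)
       + Ften (gmat A B C) Pmat p z x (Pmat *v y) = 0"
proof -
  have "Fh A B C p x y (Pmat *v z) + Fh A B C p y z (Pmat *v x) + Fh A B C p z x (Pmat *v y) = 0"
    unfolding Fh_def Pv
    by (simp add: sum_4 Lc_def gmat_def vector_def algebra_simps)
  then show ?thesis unfolding Ften_half[where A=A and B=B and C=C and p=p, OF assms] by simp
qed

lemma fin:
  fixes a b c X Y Z :: real
  assumes "a > c" "c > b" "b > 0"
  shows "(2 * alf a b c * X + 4 * bet a b c * Z + 2 * gam a b c * Y = 0 \<and>
          2 * alf a b c * Y + 4 * bet a b c * Z + 2 * gam a b c * X = 0) \<longleftrightarrow>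
         ((a + c) * Y = 2 * b * Z \<and> Y = X)"
proof -
  define r1 where "r1 = 1/(a+2*b+c)"
  define r2 where "r2 = 1/(a-c)"
  define r3 where "r3 = 1/(a-2*b+c)"
  define D where "D = (a+2*b+c)*(a-2*b+c)"
  have nz: "a+2*b+c \<noteq> 0" "a-c \<noteq> 0" "a-2*b+c \<noteq> 0" using assms by auto
  have e: "(a+2*b+c) * r1 = 1" "(a-c) * r2 = 1" "(a-2*b+c) * r3 = 1" using nz by (simp_all add: r1_def r2_def r3_def)
  have d: "alf a b c = (r1+2*r2+r3)/4" "bet a b c = (r1-r3)/4" "gam a b c = (r1-2*r2+r3)/4"
    by (simp_all add: alf_def bet_def gam_def r1_def r2_def r3_def)
  have Dnz: "D \<noteq> 0" using nz by (simp add: D_def)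
  have r2nz: "r2 \<noteq> 0" using e(2) by auto
  have k1: "alf a b c - gam a b c = r2" unfolding d by (simp add: field_simps)
  have "(alf a b c + gam a b c) * D = ((a+2*b+c) * r1 * (a-2*b+c) + (a-2*b+c) * r3 * (a+2*b+c))/2"
    unfolding d D_def by (simp add: field_simps)
  then have k2: "(alf a b c + gam a b c) * D = a + c" using e by simp
  have "bet a b c * D = ((a+2*b+c) * r1 * (a-2*b+c) - (a-2*b+c) * r3 * (a+2*b+c))/4"
    unfolding d D_def by (simp add: field_simps)
  then have k3: "bet a b c * D = - b" using e by simp
  have key: "D * ((alf a b c + gam a b c) * Y + 2 * bet a b c * Z) = (a + c) * Y - 2 * b * Z"
  proof -
    have "D * ((alf a b c + gam a b c) * Y + 2 * bet a b c * Z) = ((alf a b c + gam a b c) * D) * Y + 2 * (bet a b c * D) * Z"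
      by (simp add: algebra_simps)
    then show ?thesis using k2 k3 by simp
  qed
  show ?thesis
  proof
    assume h: "2 * alf a b c * X + 4 * bet a b c * Z + 2 * gam a b c * Y = 0 \<and>
          2 * alf a b c * Y + 4 * bet a b c * Z + 2 * gam a b c * X = 0"
    then have "2 * (alf a b c - gam a b c) * (X - Y) = 0" by (simp add: algebra_simps)
    then have xy: "Y = X" using k1 r2nz by simp
    then have "(alf a b c + gam a b c) * Y + 2 * bet a b c * Z = 0" using h by (simp add: algebra_simps)
    then have "D * ((alf a b c + gam a b c) * Y + 2 * bet a b c * Z) = 0" by simp
    then have "(a + c) * Y - 2 * b * Z = 0" using key by simp
    with xy show "(a + c) * Y = 2 * b * Z \<and> Y = X" by simp
  next
    assume h: "(a + c) * Y = 2 * b * Z \<and> Y = X"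
    from h have h1: "(a + c) * Y = 2 * b * Z" by blast
    have "D * ((alf a b c + gam a b c) * Y + 2 * bet a b c * Z) = 0" using key h1 by simp
    then have "(alf a b c + gam a b c) * Y + 2 * bet a b c * Z = 0" using Dnz by simp
    then show "2 * alf a b c * X + 4 * bet a b c * Z + 2 * gam a b c * Y = 0 \<and>
          2 * alf a b c * Y + 4 * bet a b c * Z + 2 * gam a b c * X = 0"
      using h by (simp add: algebra_simps)
  qed
qed

lemma sum_single:
  assumes "\<And>x. x \<noteq> a \<Longrightarrow> f x = 0"
  shows "(\<Sum>x\<in>(UNIV::'n::finite set). f x) = (f a::real)"
proof -
  have "(\<Sum>x\<in>(UNIV::'n set). f x) = f a + (\<Sum>x\<in>UNIV - {a}. f x)"
    by (rule sum.remove) auto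
  also have "(\<Sum>x\<in>UNIV - {a}. f x) = 0" using assms by (intro sum.neutral) auto
  finally show ?thesis by simp
qed

lemma Ften_axis: "Ften g P p (axis i 1) (axis j 1) z = (\<Sum>k\<in>UNIV. z $ k * Fcoord g P p i j k)"
proof -
  have "Ften g P p (axis i 1) (axis j 1) z = (\<Sum>j'\<in>UNIV. \<Sum>k\<in>UNIV. axis i 1 $ i * axis j 1 $ j' * z $ k * Fcoord g P p i j' k)"
    unfolding Ften_def by (rule sum_single) (simp add: axis_def)
  also have "\<dots> = (\<Sum>k\<in>UNIV. axis i 1 $ i * axis j 1 $ j * z $ k * Fcoord g P p i j k)"
    by (rule sum_single) (simp add: axis_def)
  also have "\<dots> = (\<Sum>k\<in>UNIV. z $ k * Fcoord g P p i j k)" by (simp add: axis_def)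
  finally show ?thesis .
qed

definition thk :: "(real^4 \<Rightarrow> real) \<Rightarrow> (real^4 \<Rightarrow> real) \<Rightarrow> (real^4 \<Rightarrow> real) \<Rightarrow> real^4 \<Rightarrow> 4 \<Rightarrow> real" where
  "thk A B C p k = (\<Sum>i\<in>UNIV. \<Sum>j\<in>UNIV. matrix_inv (gmat A B C p) $ i $ j * Fcoord (gmat A B C) Pmat p i j k)"

lemma theta_eq: "theta (gmat A B C) Pmat p z = (\<Sum>k\<in>UNIV. z $ k * thk A B C p k)"
  unfolding theta_def thk_def Ften_axis by (simp add: sum_4 algebra_simps)

lemma theta_all: "(\<forall>z. theta (gmat A B C) Pmat p z = 0) \<longleftrightarrow> (\<forall>k. thk A B C p k = 0)"
proof
  assume h: "\<forall>z. theta (gmat A B C) Pmat p z = 0"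
  show "\<forall>k. thk A B C p k = 0"
  proof
    fix k
    have "theta (gmat A B C) Pmat p (axis k 1) = axis k 1 $ k * thk A B C p k"
      unfolding theta_eq by (rule sum_single) (simp add: axis_def)
    then have "theta (gmat A B C) Pmat p (axis k 1) = thk A B C p k" by (simp add: axis_def)
    then show "thk A B C p k = 0" using h by simp
  qed
next
  assume "\<forall>k. thk A B C p k = 0"
  then show "\<forall>z. theta (gmat A B C) Pmat p z = 0" by (simp add: theta_eq)
qed

lemma thk_vals:
  assumes "A p > C p" "C p > B p" "B p > 0"
  defines "al \<equiv> alf (A p) (B p) (C p)" and "be \<equiv> bet (A p) (B p) (C p)" and "ga \<equiv> gam (A p) (B p) (C p)"
  shows "thk A B C p 1 = 2 * al * (pd 3 A p - pd 1 C p) + 4 * be * (pd 3 B p - pd 1 B p) + 2 * ga * (pd 3 C p - pd 1 A p)"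
    "thk A B C p 2 = 2 * al * (pd 4 A p - pd 2 C p) + 4 * be * (pd 4 B p - pd 2 B p) + 2 * ga * (pd 4 C p - pd 2 A p)"
    "thk A B C p 3 = - (2 * al * (pd 3 C p - pd 1 A p) + 4 * be * (pd 3 B p - pd 1 B p) + 2 * ga * (pd 3 A p - pd 1 C p))"
    "thk A B C p 4 = - (2 * al * (pd 4 C p - pd 2 A p) + 4 * be * (pd 4 B p - pd 2 B p) + 2 * ga * (pd 4 A p - pd 2 C p))"
proof -
  have mi: "matrix_inv (gmat A B C p) = Hmat al be ga"
    unfolding al_def be_def ga_def by (rule minv_unique[OF gH[where A=A and B=B and C=C and p=p, OF assms(1-3)]])
  note F = Fc[where A=A and B=B and C=C and p=p, OF assms(1-3)]
  show "thk A B C p 1 = 2 * al * (pd 3 A p - pd 1 C p) + 4 * be * (pd 3 B p - pd 1 B p) + 2 * ga * (pd 3 C p - pd 1 A p)"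
    unfolding thk_def mi F by (simp add: sum_4 Hmat_def Lc_def gmat_def vector_def field_simps)
  show "thk A B C p 2 = 2 * al * (pd 4 A p - pd 2 C p) + 4 * be * (pd 4 B p - pd 2 B p) + 2 * ga * (pd 4 C p - pd 2 A p)"
    unfolding thk_def mi F by (simp add: sum_4 Hmat_def Lc_def gmat_def vector_def field_simps)
  show "thk A B C p 3 = - (2 * al * (pd 3 C p - pd 1 A p) + 4 * be * (pd 3 B p - pd 1 B p) + 2 * ga * (pd 3 A p - pd 1 C p))"
    unfolding thk_def mi F by (simp add: sum_4 Hmat_def Lc_def gmat_def vector_def field_simps)
  show "thk A B C p 4 = - (2 * al * (pd 4 C p - pd 2 A p) + 4 * be * (pd 4 B p - pd 2 B p) + 2 * ga * (pd 4 A p - pd 2 C p))"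
    unfolding thk_def mi F by (simp add: sum_4 Hmat_def Lc_def gmat_def vector_def field_simps)
qed


lemma pointwise:
  assumes "A p > C p" "C p > B p" "B p > 0"
  shows "W2_at (gmat A B C) Pmat p \<longleftrightarrow>
         ((A p + C p) * (pd 3 C p - pd 1 A p) = 2 * B p * (pd 3 B p - pd 1 B p)
               \<and> pd 3 C p - pd 1 A p = pd 3 A p - pd 1 C p
               \<and> (A p + C p) * (pd 4 C p - pd 2 A p) = 2 * B p * (pd 4 B p - pd 2 B p)
               \<and> pd 4 C p - pd 2 A p = pd 4 A p - pd 2 C p)"
proof -
  note pos = assms(1-3)
  have c: "\<forall>x y z. Ften (gmat A B C) Pmat p x y (Pmat *v z) + Ften (gmat A B C) Pmat p y z (Pmat *v x)
       + Ften (gmat A B C) Pmat p z x (Pmat *v y) = 0"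
    using cyc[where A=A and B=B and C=C and p=p, OF pos] by blast
  have "W2_at (gmat A B C) Pmat p \<longleftrightarrow> (\<forall>k. thk A B C p k = 0)"
    unfolding W2_at_def theta_all using c by simp
  also have "\<dots> \<longleftrightarrow> thk A B C p 1 = 0 \<and> thk A B C p 3 = 0 \<and> thk A B C p 2 = 0 \<and> thk A B C p 4 = 0"
    by (auto simp add: forall_4)
  also have "\<dots> \<longleftrightarrow> ((A p + C p) * (pd 3 C p - pd 1 A p) = 2 * B p * (pd 3 B p - pd 1 B p)
               \<and> pd 3 C p - pd 1 A p = pd 3 A p - pd 1 C p)
             \<and> ((A p + C p) * (pd 4 C p - pd 2 A p) = 2 * B p * (pd 4 B p - pd 2 B p)
               \<and> pd 4 C p - pd 2 A p = pd 4 A p - pd 2 C p)"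
    unfolding thk_vals[where A=A and B=B and C=C and p=p, OF pos] neg_equal_0_iff_equal
    using fin[where a="A p" and b="B p" and c="C p" and X="pd 3 A p - pd 1 C p"
        and Y="pd 3 C p - pd 1 A p" and Z="pd 3 B p - pd 1 B p", OF pos]
      fin[where a="A p" and b="B p" and c="C p" and X="pd 4 A p - pd 2 C p"
        and Y="pd 4 C p - pd 2 A p" and Z="pd 4 B p - pd 2 B p", OF pos]
    by blast
  finally show ?thesis by blast
qed

theorem theorem3p8:
  fixes U :: "(real^4) set" and A B C :: "real^4 \<Rightarrow> real"
  assumes "open U"
    and "coord_smooth_on U A" and "coord_smooth_on U B" and "coord_smooth_on U C"
    and "\<forall>p\<in>U. A p > C p \<and> C p > B p \<and> B p > 0"
  shows "(\<forall>p\<in>U. W2_at (gmat A B C) Pmat p) \<longleftrightarrow>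
         (\<forall>p\<in>U. (A p + C p) * (pd 3 C p - pd 1 A p) = 2 * B p * (pd 3 B p - pd 1 B p)
               \<and> pd 3 C p - pd 1 A p = pd 3 A p - pd 1 C p
               \<and> (A p + C p) * (pd 4 C p - pd 2 A p) = 2 * B p * (pd 4 B p - pd 2 B p)
               \<and> pd 4 C p - pd 2 A p = pd 4 A p - pd 2 C p)"
proof -
  have "\<forall>p\<in>U. W2_at (gmat A B C) Pmat p \<longleftrightarrow>
         ((A p + C p) * (pd 3 C p - pd 1 A p) = 2 * B p * (pd 3 B p - pd 1 B p)
               \<and> pd 3 C p - pd 1 A p = pd 3 A p - pd 1 C p
               \<and> (A p + C p) * (pd 4 C p - pd 2 A p) = 2 * B p * (pd 4 B p - pd 2 B p)
               \<and> pd 4 C p - pd 2 A p = pd 4 A p - pd 2 C p)"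
  proof
    fix p assume "p \<in> U"
    then have "A p > C p" "C p > B p" "B p > 0" using assms(5) by auto
    then show "W2_at (gmat A B C) Pmat p \<longleftrightarrow>
         ((A p + C p) * (pd 3 C p - pd 1 A p) = 2 * B p * (pd 3 B p - pd 1 B p)
               \<and> pd 3 C p - pd 1 A p = pd 3 A p - pd 1 C p
               \<and> (A p + C p) * (pd 4 C p - pd 2 A p) = 2 * B p * (pd 4 B p - pd 2 B p)
               \<and> pd 4 C p - pd 2 A p = pd 4 A p - pd 2 C p)"
      by (rule pointwise)
  qed
  then show ?thesis by blast
qed

end
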